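(* For every normed plane $(V,\|\cdot\|)$, $$\frac13\le c_B(\|\cdot\|)\le 1,$$ and $c_B(\|\cdot\|)=1$ if and only if the norm is derived from an inner product.
   Context: A normed (Minkowski) plane $(V,\|\cdot\|)$ is a two-dimensional real vector space with a norm; $o$ is the origin, $B=\{v:\|v\|\le1\}$ the unit ball, $S=\{v:\|v\|=1\}$ the unit circle. For distinct $x,y$, $\mathrm{bis}(x,y)=\{z\in V:\|z-x\|=\|z-y\|\}$. For $x\in S$, the inner projection is $\mathrm{P_I}(x)=\{z/\|z\|: z\in(\mathrm{bis}(-x,x)\cap B)\setminus\{o\}\}$. The sine function is $s:S\times S\to\mathbb{R}$, $s(u,v)=\inf_{t\in\mathbb{R}}\|u+tv\|$. The constant $c_B$ is $c_B(\|\cdot\|)=\inf_{x\in S}\ \inf_{w\in\mathrm{P_I}(x)} s(w,x)$. *)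

theory Defs
  imports "HOL-Analysis.Analysis"
begin

definition bis :: "'a::real_normed_vector \<Rightarrow> 'a \<Rightarrow> 'a set" where
  "bis x y = {z. norm (z - x) = norm (z - y)}"

definition inner_proj :: "'a::real_normed_vector \<Rightarrow> 'a set" where
  "inner_proj x = (\<lambda>z. z /\<^sub>R norm z) ` ((bis (-x) x \<inter> cball 0 1) - {0})"

definition sine_fn :: "'a::real_normed_vector \<Rightarrow> 'a \<Rightarrow> real" where
  "sine_fn u v = (INF t::real. norm (u + t *\<^sub>R v))"

definition cB :: "'a::real_normed_vector itself \<Rightarrow> real" where
  "cB _ = (INF x \<in> sphere (0::'a) 1. INF w \<in> inner_proj x. sine_fn w x)"

definition inner_product_norm :: "'a::real_normed_vector itself \<Rightarrow> bool" where
  "inner_product_norm _ \<longleftrightarrow>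
     (\<exists>f :: 'a \<Rightarrow> 'a \<Rightarrow> real. bilinear f \<and> (\<forall>x y. f x y = f y x)
        \<and> (\<forall>x. norm x = sqrt (f x x)))"

end

theory Submission
  imports Defs
begin

lemma dim2_basis:
  assumes "dim (UNIV :: 'a::real_normed_vector set) = 2"
  obtains B :: "'a::real_normed_vector set" where "independent B" "span B = UNIV" "card B = 2" "finite B"
proof -
  obtain B :: "'a set" where "B \<subseteq> UNIV" "independent B" "UNIV \<subseteq> span B" "card B = dim (UNIV::'a set)"
    by (rule basis_exists)
  moreover have "finite B" using \<open>card B = dim (UNIV::'a set)\<close> assms card.infinite by fastforce
  ultimately show ?thesis using assms that by auto
qed

lemma ex_nonzero:
  assumes "dim (UNIV :: 'a::real_normed_vector set) = 2"
  shows "\<exists>x::'a. x \<noteq> 0"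
proof (rule ccontr)
  assume "\<not> ?thesis"
  then have u: "(UNIV::'a set) = {0}" by auto
  obtain B :: "'a set" where "independent B" "span B = UNIV" "card B = 2" "finite B"
    using dim2_basis[OF assms] by blast
  then have "B \<subseteq> {0}" using u by auto
  then have "card B \<le> card {0::'a}" by (intro card_mono) auto
  then have "card B \<le> 1" by simp
  with \<open>card B = 2\<close> show False by simp
qed

lemma ex_indep:
  assumes "dim (UNIV :: 'a::real_normed_vector set) = 2" and "(x::'a) \<noteq> 0"
  shows "\<exists>w::'a. \<forall>k. w \<noteq> k *\<^sub>R x"
proof (rule ccontr)
  assume "\<not> ?thesis"
  then have "\<forall>w::'a. \<exists>k. w = k *\<^sub>R x" by auto
  then have sp: "(UNIV::'a set) \<subseteq> span {x}" by (auto simp: span_singleton)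
  obtain B :: "'a set" where B: "independent B" "span B = UNIV" "card B = 2" "finite B"
    using dim2_basis[OF assms(1)] by blast
  have "finite B \<and> card B \<le> card {x}"
    by (rule independent_span_bound) (use B sp in auto)
  with B show False by simp
qed

lemma decomp:
  assumes "dim (UNIV :: 'a::real_normed_vector set) = 2" and "(x::'a) \<noteq> 0"
    and "\<forall>k. w \<noteq> k *\<^sub>R x"
  shows "\<exists>a b. z = a *\<^sub>R w + b *\<^sub>R x"
proof (rule ccontr)
  assume nz: "\<not> ?thesis"
  have i1: "independent {x}" using assms(2) by (simp add: independent_insertI)
  have wx: "w \<notin> span {x}" using assms(3) by (auto simp: span_singleton)
  have i2: "independent {w, x}" by (rule independent_insertI[OF wx i1])
  have zs: "z \<notin> span {w, x}"
  proof
    assume "z \<in> span {w, x}"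
    then obtain a where "z - a *\<^sub>R w \<in> span {x}" using span_breakdown_eq by blast
    then obtain b where "z - a *\<^sub>R w = b *\<^sub>R x" by (auto simp: span_singleton)
    then have "z = a *\<^sub>R w + b *\<^sub>R x" by (simp add: algebra_simps)
    with nz show False by blast
  qed
  have i3: "independent {z, w, x}" by (rule independent_insertI[OF zs i2])
  have "w \<noteq> x" using assms(3)[rule_format, of 1] by auto
  moreover have "z \<noteq> w" "z \<noteq> x" using zs by (auto intro: span_base)
  ultimately have c3: "card {z, w, x} = 3" by auto
  obtain B :: "'a set" where B: "independent B" "span B = UNIV" "card B = 2" "finite B"
    using dim2_basis[OF assms(1)] by blast
  have "finite {z,w,x} \<and> card {z, w, x} \<le> card B"
    by (rule independent_span_bound) (use B i3 in auto)
  with B c3 show False by simp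
qed

lemma bis_ex:
  fixes x w :: "'a::real_normed_vector"
  assumes x0: "x \<noteq> 0" and wx: "\<forall>k. w \<noteq> k *\<^sub>R x" and r: "r > 0"
  shows "\<exists>z. norm z = r \<and> norm (z + x) = norm (z - x)"
proof -
  define c where "c s = cos s *\<^sub>R w + sin s *\<^sub>R x" for s
  have cnz: "c s \<noteq> 0" for s
  proof
    assume h: "c s = 0"
    show False
    proof (cases "cos s = 0")
      case True
      then have "sin s \<noteq> 0" using sin_cos_squared_add[of s] by auto
      with h True show False using x0 by (simp add: c_def)
    next
      case False
      from h have "cos s *\<^sub>R w = - (sin s *\<^sub>R x)" by (simp add: c_def eq_neg_iff_add_eq_0)
      have "w = (1 / cos s) *\<^sub>R (cos s *\<^sub>R w)" using False by simp
      also have "\<dots> = (- sin s / cos s) *\<^sub>R x" using \<open>cos s *\<^sub>R w = - (sin s *\<^sub>R x)\<close> by simp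
      finally have "w = (- sin s / cos s) *\<^sub>R x" .
      with wx show False by blast
    qed
  qed
  define g where "g s = (r / norm (c s)) *\<^sub>R c s" for s
  have ng: "norm (g s) = r" for s using cnz r by (simp add: g_def)
  define G where "G s = norm (g s + x) - norm (g s - x)" for s
  have cont: "continuous_on {0..pi} G"
    unfolding G_def g_def c_def using cnz[unfolded c_def]
    by (intro continuous_intros) auto
  have c0: "c 0 = w" and cpi: "c pi = - w" by (simp_all add: c_def)
  have gpi: "g pi = - g 0" by (simp add: g_def c0 cpi)
  have e1: "norm (- g 0 + x) = norm (g 0 - x)" by (metis minus_diff_eq norm_minus_cancel add.commute diff_conv_add_uminus)
  have e2: "norm (- g 0 - x) = norm (g 0 + x)" by (metis minus_add_distrib norm_minus_cancel diff_conv_add_uminus)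
  have Gpi: "G pi = - G 0"
    unfolding G_def gpi using e1 e2 by simp
  have "\<exists>s. 0 \<le> s \<and> s \<le> pi \<and> G s = 0"
  proof (cases "G 0 \<le> 0")
    case True
    then show ?thesis using IVT'[of G 0 0 pi] cont Gpi by auto
  next
    case False
    then show ?thesis using IVT2'[of G pi 0 0] cont Gpi by auto
  qed
  then obtain s where "G s = 0" by blast
  then show ?thesis using ng unfolding G_def by (intro exI[of _ "g s"]) auto
qed

lemma sine_ge:
  assumes "\<And>t. c \<le> norm (u + t *\<^sub>R v)"
  shows "c \<le> sine_fn u v"
  unfolding sine_fn_def by (rule cINF_greatest) (use assms in auto)

lemma sine_le:
  "sine_fn u v \<le> norm (u + t *\<^sub>R v)"
  unfolding sine_fn_def by (rule cINF_lower) (auto intro: bdd_belowI[of _ 0])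

lemma sine_nonneg: "0 \<le> sine_fn u v"
  by (rule sine_ge) simp

lemma half_bound:
  fixes x z :: "'a::real_normed_vector"
  assumes x1: "norm x = 1" and b: "norm (z + x) = norm (z - x)" and z1: "norm z \<le> 1"
  shows "norm z / 2 \<le> norm (z + s *\<^sub>R x)"
proof -
  have "norm (2 *\<^sub>R x) \<le> norm (z + x) + norm (z - x)"
    using norm_triangle_ineq4[of "z + x" "z - x"] by (simp add: algebra_simps scaleR_2)
  then have rho: "1 \<le> norm (z + x)" using x1 b by simp
  have t1: "norm z \<le> norm (z + s *\<^sub>R x) + \<bar>s\<bar>"
    using norm_triangle_ineq4[of "z + s *\<^sub>R x" "s *\<^sub>R x"] x1 by simp
  show ?thesis
  proof (cases "0 \<le> s")
    case True
    show ?thesis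
    proof (cases "s \<le> 1")
      case True
      have "norm (z + x) \<le> norm (z + s *\<^sub>R x) + norm ((1 - s) *\<^sub>R x)"
        using norm_triangle_ineq[of "z + s *\<^sub>R x" "(1 - s) *\<^sub>R x"] by (simp add: algebra_simps)
      then have "norm (z + x) \<le> norm (z + s *\<^sub>R x) + (1 - s)" using True x1 by simp
      then show ?thesis using t1 rho \<open>0 \<le> s\<close> by linarith
    next
      case False
      have "norm (s *\<^sub>R (z + x)) \<le> norm (z + s *\<^sub>R x) + norm ((s - 1) *\<^sub>R z)"
        using norm_triangle_ineq[of "z + s *\<^sub>R x" "(s - 1) *\<^sub>R z"] by (simp add: algebra_simps)
      then have "s * norm (z + x) \<le> norm (z + s *\<^sub>R x) + (s - 1) * norm z" using False by simp
      moreover have "s \<le> s * norm (z + x)" using rho False by simp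
      moreover have "(s - 1) * norm z \<le> s - 1" using z1 False mult_left_mono[of "norm z" 1 "s - 1"] by auto
      ultimately show ?thesis using z1 by linarith
    qed
  next
    case False
    show ?thesis
    proof (cases "-1 \<le> s")
      case True
      have "norm (z - x) \<le> norm (z + s *\<^sub>R x) + norm ((1 + s) *\<^sub>R x)"
        using norm_triangle_ineq4[of "z + s *\<^sub>R x" "(1 + s) *\<^sub>R x"] by (simp add: algebra_simps)
      then have "norm (z - x) \<le> norm (z + s *\<^sub>R x) + (1 + s)" using True x1 by simp
      then show ?thesis using t1 rho b False by linarith
    next
      case F2: False
      have "norm ((-s) *\<^sub>R (z - x)) \<le> norm (z + s *\<^sub>R x) + norm ((- s - 1) *\<^sub>R z)"
        using norm_triangle_ineq[of "z + s *\<^sub>R x" "(- s - 1) *\<^sub>R z"] by (simp add: algebra_simps)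
      then have "(-s) * norm (z - x) \<le> norm (z + s *\<^sub>R x) + (-s - 1) * norm z" using F2 by simp
      moreover have "-s \<le> (-s) * norm (z - x)" using rho b F2 by simp
      moreover have "(-s - 1) * norm z \<le> -s - 1" using z1 F2 mult_left_mono[of "norm z" 1 "-s - 1"] by auto
      ultimately show ?thesis using z1 by linarith
    qed
  qed
qed

lemma inner_proj_iff:
  "w \<in> inner_proj x \<longleftrightarrow> (\<exists>z. z \<noteq> 0 \<and> norm z \<le> 1 \<and> norm (z + x) = norm (z - x) \<and> w = z /\<^sub>R norm z)"
  unfolding inner_proj_def bis_def by (auto simp: dist_norm)

lemma sine_half:
  fixes x :: "'a::real_normed_vector"
  assumes x1: "norm x = 1" and w: "w \<in> inner_proj x"
  shows "1/2 \<le> sine_fn w x"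
proof -
  obtain z where z: "z \<noteq> 0" "norm z \<le> 1" "norm (z + x) = norm (z - x)" "w = z /\<^sub>R norm z"
    using w inner_proj_iff by blast
  have np: "norm z > 0" using z by simp
  show ?thesis
  proof (rule sine_ge)
    fix t
    have "w + t *\<^sub>R x = (1 / norm z) *\<^sub>R (z + (norm z * t) *\<^sub>R x)"
      using np z(4) by (simp add: algebra_simps divide_inverse)
    then have "norm (w + t *\<^sub>R x) = norm (z + (norm z * t) *\<^sub>R x) / norm z"
      using np by simp
    moreover have "norm z / 2 \<le> norm (z + (norm z * t) *\<^sub>R x)"
      by (rule half_bound[OF x1 z(3) z(2)])
    ultimately have "norm z * (1/2) \<le> norm z * norm (w + t *\<^sub>R x)" using np by (simp add: field_simps)
    then show "1/2 \<le> norm (w + t *\<^sub>R x)" using np by (simp add: mult_le_cancel_left_pos)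
  qed
qed

definition iP :: "'a::real_normed_vector \<Rightarrow> real" where
  "iP x = (INF w \<in> inner_proj x. sine_fn w x)"

lemma cB_alt: "cB TYPE('a::real_normed_vector) = (INF x \<in> sphere (0::'a) 1. iP x)"
  by (simp add: cB_def iP_def)

lemma proj_ne:
  fixes x :: "'a::real_normed_vector"
  assumes d: "dim (UNIV :: 'a set) = 2" and x1: "norm x = 1"
  shows "inner_proj x \<noteq> {}"
proof -
  have x0: "x \<noteq> 0" using x1 by auto
  obtain w where "\<forall>k. w \<noteq> k *\<^sub>R x" using ex_indep[OF d x0] by blast
  then obtain z where z: "norm z = 1" "norm (z + x) = norm (z - x)" using bis_ex[OF x0, of w 1] by auto
  then have "z /\<^sub>R norm z \<in> inner_proj x" unfolding inner_proj_iff
    by (intro exI[of _ z]) auto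
  then show ?thesis by auto
qed

lemma iP_ge:
  fixes x :: "'a::real_normed_vector"
  assumes d: "dim (UNIV :: 'a set) = 2" and x1: "norm x = 1"
  shows "1/2 \<le> iP x"
  unfolding iP_def by (rule cINF_greatest) (use proj_ne[OF d x1] sine_half[OF x1] in auto)

lemma iP_le:
  fixes x :: "'a::real_normed_vector"
  assumes w: "w \<in> inner_proj x"
  shows "iP x \<le> sine_fn w x"
  unfolding iP_def by (rule cINF_lower[OF _ w]) (auto intro: bdd_belowI[of _ 0] sine_nonneg)

lemma sphere_ne:
  assumes d: "dim (UNIV :: 'a::real_normed_vector set) = 2"
  shows "sphere (0::'a) 1 \<noteq> {}"
proof -
  obtain x :: 'a where "x \<noteq> 0" using ex_nonzero[OF d] by blast
  then have "x /\<^sub>R norm x \<in> sphere 0 1" by simp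
  then show ?thesis by blast
qed

lemma cB_ge_half:
  assumes d: "dim (UNIV :: 'a::real_normed_vector set) = 2"
  shows "1/2 \<le> cB TYPE('a)"
  unfolding cB_alt by (rule cINF_greatest) (use sphere_ne[OF d] iP_ge[OF d] in auto)

lemma cB_le_iP:
  fixes x :: "'a::real_normed_vector"
  assumes d: "dim (UNIV :: 'a set) = 2" and x1: "norm x = 1"
  shows "cB TYPE('a) \<le> iP x"
  unfolding cB_alt
  by (rule cINF_lower) (use x1 iP_ge[OF d] in \<open>auto intro: bdd_belowI[of _ "1/2"]\<close>)

lemma cB_le_1:
  assumes d: "dim (UNIV :: 'a::real_normed_vector set) = 2"
  shows "cB TYPE('a) \<le> 1"
proof -
  obtain x :: 'a where "x \<in> sphere 0 1" using sphere_ne[OF d] by blast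
  then have x1: "norm x = 1" by simp
  obtain w where w: "w \<in> inner_proj x" using proj_ne[OF d x1] by blast
  have w1: "norm w = 1" using w unfolding inner_proj_iff by auto
  have "cB TYPE('a) \<le> iP x" by (rule cB_le_iP[OF d x1])
  also have "\<dots> \<le> sine_fn w x" by (rule iP_le[OF w])
  also have "\<dots> \<le> norm (w + 0 *\<^sub>R x)" by (rule sine_le)
  finally show ?thesis using w1 by simp
qed

lemma R_cond:
  fixes x z :: "'a::real_normed_vector"
  assumes d: "dim (UNIV :: 'a set) = 2" and c1: "cB TYPE('a) = 1"
    and x1: "norm x = 1" and b: "norm (z + x) = norm (z - x)" and z1: "norm z \<le> 1"
  shows "norm z \<le> norm (z + t *\<^sub>R x)"
proof (cases "z = 0")
  case True then show ?thesis by simp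
next
  case False
  define w where "w = z /\<^sub>R norm z"
  have w: "w \<in> inner_proj x" unfolding inner_proj_iff w_def using False z1 b by blast
  have "1 \<le> sine_fn w x" using cB_le_iP[OF d x1] iP_le[OF w] c1 by simp
  then have s: "1 \<le> norm (w + (t / norm z) *\<^sub>R x)" using sine_le by (rule order_trans)
  have np: "norm z > 0" using False by simp
  have "w + (t / norm z) *\<^sub>R x = (1 / norm z) *\<^sub>R (z + t *\<^sub>R x)"
    using np by (simp add: w_def algebra_simps divide_inverse)
  then have "norm (w + (t / norm z) *\<^sub>R x) = norm (z + t *\<^sub>R x) / norm z" using np by simp
  with s np show ?thesis by (simp add: field_simps)
qed

lemma R_gen:
  fixes w z :: "'a::real_normed_vector"
  assumes d: "dim (UNIV :: 'a set) = 2" and c1: "cB TYPE('a) = 1"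
    and w0: "w \<noteq> 0" and b: "norm (z + w) = norm (z - w)" and zw: "norm z \<le> norm w"
  shows "norm z \<le> norm (z + t *\<^sub>R w)"
proof -
  define x where "x = w /\<^sub>R norm w"
  define z' where "z' = z /\<^sub>R norm w"
  have np: "norm w > 0" using w0 by simp
  have x1: "norm x = 1" using w0 by (simp add: x_def)
  have e1: "z' + x = (1/norm w) *\<^sub>R (z + w)" and e2: "z' - x = (1/norm w) *\<^sub>R (z - w)"
    by (simp_all add: x_def z'_def algebra_simps divide_inverse)
  have b': "norm (z' + x) = norm (z' - x)" unfolding e1 e2 using b by simp
  have z1: "norm z' \<le> 1" using zw np by (simp add: z'_def field_simps)
  have "norm z' \<le> norm (z' + t *\<^sub>R x)" by (rule R_cond[OF d c1 x1 b' z1])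
  have "z' + t *\<^sub>R x = (1/norm w) *\<^sub>R (z + t *\<^sub>R w)"
    by (simp add: x_def z'_def algebra_simps divide_inverse)
  then have "norm (z' + t *\<^sub>R x) = norm (z + t *\<^sub>R w) / norm w" using np by simp
  moreover have "norm z' = norm z / norm w" using np by (simp add: z'_def divide_inverse mult.commute)
  ultimately have "norm z / norm w \<le> norm (z + t *\<^sub>R w) / norm w"
    using \<open>norm z' \<le> norm (z' + t *\<^sub>R x)\<close> by simp
  then show ?thesis using np by (simp add: divide_right_mono_neg divide_le_cancel)
qed

lemma bil_expand:
  assumes bl: "bilinear f" and sy: "\<forall>x y. f x y = f y x"
  shows "f (a + t *\<^sub>R b) (a + t *\<^sub>R b) = f a a + 2 * t * f a b + t^2 * f b b"
proof -
  have "f (a + t *\<^sub>R b) (a + t *\<^sub>R b) = f a a + f a (t *\<^sub>R b) + (f (t *\<^sub>R b) a + f (t *\<^sub>R b) (t *\<^sub>R b))"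
    by (simp add: bilinear_ladd[OF bl] bilinear_radd[OF bl])
  also have "\<dots> = f a a + t * f a b + (t * f b a + t * (t * f b b))"
    by (simp add: bilinear_lmul[OF bl] bilinear_rmul[OF bl])
  also have "\<dots> = f a a + 2 * t * f a b + t^2 * f b b"
    using sy[rule_format, of b a] by (simp add: power2_eq_square algebra_simps)
  finally show ?thesis .
qed

lemma ip_cB:
  assumes d: "dim (UNIV :: 'a::real_normed_vector set) = 2"
    and ip: "inner_product_norm TYPE('a)"
  shows "cB TYPE('a) = 1"
proof -
  obtain f :: "'a \<Rightarrow> 'a \<Rightarrow> real" where bl: "bilinear f" and sy: "\<forall>x y. f x y = f y x"
    and nf: "\<forall>x. norm x = sqrt (f x x)"
    using ip unfolding inner_product_norm_def by blast
  have sq: "norm v ^ 2 = f v v" for v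
  proof -
    have e: "norm v = sqrt (f v v)" using nf by blast
    have "0 \<le> sqrt (f v v)" unfolding e[symmetric] by simp
    then have "0 \<le> f v v" by simp
    then show ?thesis unfolding e by simp
  qed
  have s1: "1 \<le> sine_fn w x" if x1: "norm x = 1" and w: "w \<in> inner_proj x" for x w :: 'a
  proof -
    obtain z where z: "z \<noteq> 0" "norm z \<le> 1" "norm (z + x) = norm (z - x)" "w = z /\<^sub>R norm z"
      using w inner_proj_iff by blast
    have "f (z + 1 *\<^sub>R x) (z + 1 *\<^sub>R x) = f (z + (-1) *\<^sub>R x) (z + (-1) *\<^sub>R x)"
      using z(3) sq[of "z + x"] sq[of "z - x"] by simp
    then have fzx: "f z x = 0" unfolding bil_expand[OF bl sy] by simp
    have fwx: "f w x = 0" using z(4) fzx by (simp add: bilinear_lmul[OF bl])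
    have w1: "f w w = 1" using z(1,4) sq[of w] by simp
    have x1': "f x x = 1" using x1 sq[of x] by simp
    show ?thesis
    proof (rule sine_ge)
      fix t
      have "norm (w + t *\<^sub>R x) ^ 2 = f (w + t *\<^sub>R x) (w + t *\<^sub>R x)" by (rule sq)
      also have "\<dots> = f w w + 2 * t * f w x + t^2 * f x x" by (rule bil_expand[OF bl sy])
      also have "\<dots> = 1 + t^2" using fwx w1 x1' by simp
      finally have "1 ^ 2 \<le> norm (w + t *\<^sub>R x) ^ 2" by simp
      then show "1 \<le> norm (w + t *\<^sub>R x)" by (rule power2_le_imp_le) simp
    qed
  qed
  have "1 \<le> cB TYPE('a)"
    unfolding cB_alt
  proof (rule cINF_greatest)
    show "sphere (0::'a) 1 \<noteq> {}" by (rule sphere_ne[OF d])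
    fix x :: 'a assume "x \<in> sphere 0 1"
    then have x1: "norm x = 1" by simp
    show "1 \<le> iP x" unfolding iP_def
      by (rule cINF_greatest) (use proj_ne[OF d x1] s1[OF x1] in auto)
  qed
  then show ?thesis using cB_le_1[OF d] by simp
qed

locale P2 =
  fixes ty :: "'a::real_normed_vector itself"
  assumes d: "dim (UNIV :: 'a set) = 2" and c1: "cB TYPE('a) = 1"
begin

lemma R: "w \<noteq> 0 \<Longrightarrow> norm (z + w) = norm (z - w) \<Longrightarrow> norm z \<le> norm w
   \<Longrightarrow> norm (z::'a) \<le> norm (z + t *\<^sub>R w)"
  by (rule R_gen[OF d c1])

lemma decomp': "(x::'a) \<noteq> 0 \<Longrightarrow> \<forall>k. w \<noteq> k *\<^sub>R x \<Longrightarrow> \<exists>a b. z = a *\<^sub>R w + b *\<^sub>R x"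
  by (rule decomp[OF d])

lemma birk_scale:
  fixes x u :: 'a
  assumes "\<forall>t. 1 \<le> norm (x + t *\<^sub>R u)" and k: "k > 0"
  shows "k \<le> norm (k *\<^sub>R x + c *\<^sub>R u)"
proof -
  have "k *\<^sub>R x + c *\<^sub>R u = k *\<^sub>R (x + (c / k) *\<^sub>R u)" using k by (simp add: algebra_simps)
  then have "norm (k *\<^sub>R x + c *\<^sub>R u) = k * norm (x + (c / k) *\<^sub>R u)" using k by simp
  moreover have "1 \<le> norm (x + (c / k) *\<^sub>R u)" using assms(1) by blast
  ultimately show ?thesis using k by simp
qed

lemma SC:
  fixes p q :: 'a
  assumes p1: "norm p = 1" and q1: "norm q = 1" and pq: "norm (p + q) = 2"
  shows "p = q"
proof (rule ccontr)
  assume npq: "p \<noteq> q"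
  define dd where "dd = norm (q - p)"
  have dd0: "dd > 0" using npq by (simp add: dd_def)
  define x where "x = (1 / dd) *\<^sub>R (q - p)"
  have x1: "norm x = 1" using dd0 by (simp add: x_def dd_def)
  have x0: "x \<noteq> 0" using x1 by auto
  have qx: "q = p + dd *\<^sub>R x" using dd0 by (simp add: x_def)
  define h where "h t = norm (p + t *\<^sub>R x)" for t
  have hconv: "h (l * a + (1 - l) * b) \<le> l * h a + (1 - l) * h b" if "0 \<le> l" "l \<le> 1" for l a b
  proof -
    have "p + (l * a + (1 - l) * b) *\<^sub>R x = l *\<^sub>R (p + a *\<^sub>R x) + (1 - l) *\<^sub>R (p + b *\<^sub>R x)"
      by (simp add: algebra_simps)
    then have "h (l * a + (1 - l) * b) \<le> norm (l *\<^sub>R (p + a *\<^sub>R x)) + norm ((1 - l) *\<^sub>R (p + b *\<^sub>R x))"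
      unfolding h_def by (metis norm_triangle_ineq)
    then show ?thesis using that by (simp add: h_def)
  qed
  have h0: "h 0 = 1" using p1 by (simp add: h_def)
  have hd: "h dd = 1" using q1 qx by (simp add: h_def)
  have pq2: "p + q = 2 *\<^sub>R p + dd *\<^sub>R x" using qx by (simp add: scaleR_2)
  have "p + (dd / 2) *\<^sub>R x = (1/2) *\<^sub>R (p + q)" unfolding pq2 by (simp add: scaleR_add_right)
  then have hd2: "h (dd / 2) = 1" using pq by (simp add: h_def)
  have hlow: "t - 1 \<le> h t" for t
  proof -
    have "norm (t *\<^sub>R x) \<le> norm (p + t *\<^sub>R x) + norm p"
      using norm_triangle_ineq4[of "p + t *\<^sub>R x" p] by simp
    then show ?thesis using x1 p1 by (simp add: h_def)
  qed
  have hge: "1 \<le> h t" if t0: "0 \<le> t" for t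
  proof (cases "t < dd / 2")
    case True
    define l where "l = (dd / 2) / (dd - t)"
    have l0: "0 < l" "l \<le> 1" using True t0 dd0 by (auto simp: l_def field_simps)
    have n1: "dd - t \<noteq> 0" "2 * dd - 2 * t \<noteq> 0" using True dd0 by simp_all
    then have "l * (dd - t) = dd / 2" by (simp add: l_def field_simps)
    then have E: "l * t + (1 - l) * dd = dd / 2" by (simp add: algebra_simps)
    have "h (dd / 2) \<le> l * h t + (1 - l) * h dd" using hconv[of l t dd, unfolded E] l0 by simp
    then have "l * 1 \<le> l * h t" using hd2 hd by simp
    then show ?thesis using l0 by (simp add: mult_le_cancel_left_pos)
  next
    case False
    define l where "l = (dd / 2) / t"
    have l0: "0 < l" "l \<le> 1" using False t0 dd0 by (auto simp: l_def field_simps)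
    have E: "l * t + (1 - l) * 0 = dd / 2" using False dd0 by (simp add: l_def)
    have "h (dd / 2) \<le> l * h t + (1 - l) * h 0" using hconv[of l t 0, unfolded E] l0 by simp
    then have "l * 1 \<le> l * h t" using hd2 h0 by simp
    then show ?thesis using l0 by (simp add: mult_le_cancel_left_pos)
  qed
  have hle: "h t \<le> 1" if "0 \<le> t" "t \<le> b" "h b \<le> 1" for t b
  proof (cases "b = 0")
    case True then show ?thesis using that h0 by simp
  next
    case False
    then have b0: "b > 0" using that by simp
    define l where "l = t / b"
    have l0: "0 \<le> l" "l \<le> 1" using that b0 by (auto simp: l_def field_simps)
    have E: "l * b + (1 - l) * 0 = t" using b0 by (simp add: l_def)
    have "h t \<le> l * h b + (1 - l) * h 0" using hconv[of l b 0, unfolded E] l0 by simp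
    also have "\<dots> \<le> l * 1 + (1 - l) * 1" using that h0 l0 by (intro add_mono mult_left_mono) auto
    finally show ?thesis by simp
  qed
  define S where "S = {t. 0 \<le> t \<and> h t \<le> 1}"
  have hcont: "continuous_on UNIV h" unfolding h_def by (intro continuous_intros)
  have Sclosed: "closed S" unfolding S_def
    by (intro closed_Collect_conj closed_Collect_le hcont continuous_intros)
  have Sne: "dd \<in> S" using dd0 hd by (simp add: S_def)
  have Sbdd: "bdd_above S" unfolding S_def
  proof (rule bdd_aboveI[of _ 2])
    fix t assume "t \<in> {t. 0 \<le> t \<and> h t \<le> 1}"
    then show "t \<le> 2" using hlow[of t] by simp
  qed
  define \<beta> where "\<beta> = Sup S"
  have bS: "\<beta> \<in> S" unfolding \<beta>_def using closed_contains_Sup[of S] Sne Sbdd Sclosed by blast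
  have bge: "dd \<le> \<beta>" unfolding \<beta>_def using Sne Sbdd by (rule cSup_upper)
  have hb: "h \<beta> \<le> 1" using bS by (simp add: S_def)
  have h1: "h t = 1" if "0 \<le> t" "t \<le> \<beta>" for t
    using hle[OF that hb] hge[OF that(1)] by simp
  define u where "u s = p + s *\<^sub>R x" for s
  have u1: "norm (u s) = 1" if "0 \<le> s" "s \<le> \<beta>" for s using h1[OF that] by (simp add: h_def u_def)
  have pnx: "\<forall>k. p \<noteq> k *\<^sub>R x"
  proof
    fix k
    show "p \<noteq> k *\<^sub>R x"
    proof
      assume pk: "p = k *\<^sub>R x"
      have ht: "h t = \<bar>k + t\<bar>" for t using x1 by (simp add: h_def pk scaleR_add_left[symmetric])
      have "\<bar>k\<bar> = 1" "\<bar>k + dd/2\<bar> = 1" "\<bar>k + dd\<bar> = 1" using h0 hd hd2 ht by auto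
      then show False using dd0 by (auto simp: abs_if split: if_splits)
    qed
  qed
  have xnu: "\<forall>k. x \<noteq> k *\<^sub>R u s" for s
  proof
    fix k
    show "x \<noteq> k *\<^sub>R u s"
    proof
      assume xk: "x = k *\<^sub>R u s"
      then have e: "k *\<^sub>R p = (1 - k * s) *\<^sub>R x" by (simp add: u_def algebra_simps)
      show False
      proof (cases "k = 0")
        case True then show False using xk x0 by simp
      next
        case False
        have "p = (1 / k) *\<^sub>R (k *\<^sub>R p)" using False by simp
        also have "\<dots> = ((1 - k * s) / k) *\<^sub>R x" unfolding e by simp
        finally show False using pnx by blast
      qed
    qed
  qed
  have birk: "\<forall>t. 1 \<le> norm (x + t *\<^sub>R u s)" if s: "0 < s" "s < \<beta>" for s
  proof
    fix t
    define r where "r = min (min s (\<beta> - s)) 1"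
    have r0: "0 < r" "r \<le> 1" "r \<le> s" "r \<le> \<beta> - s" using s by (auto simp: r_def)
    have e1: "norm (r *\<^sub>R x + u s) = 1"
      using h1[of "s + r"] r0 s by (simp add: h_def u_def algebra_simps)
    have e2: "norm (r *\<^sub>R x - u s) = 1"
      using h1[of "s - r"] r0 s norm_minus_commute[of "r *\<^sub>R x" "u s"]
      by (simp add: h_def u_def algebra_simps)
    have un0: "u s \<noteq> 0" using u1[of s] s by auto
    have "norm (r *\<^sub>R x) \<le> norm (r *\<^sub>R x + (r * t) *\<^sub>R u s)"
      by (rule R[OF un0]) (use e1 e2 r0 x1 u1[of s] s in auto)
    moreover have "r *\<^sub>R x + (r * t) *\<^sub>R u s = r *\<^sub>R (x + t *\<^sub>R u s)" by (simp add: scaleR_add_right)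
    ultimately have "r * 1 \<le> r * norm (x + t *\<^sub>R u s)"
      using r0 x1 by simp
    then show "1 \<le> norm (x + t *\<^sub>R u s)" using r0 by (simp add: mult_le_cancel_left_pos)
  qed
  define \<eta> where "\<eta> = min (\<beta> / 3) (1/2)"
  have eta: "0 < \<eta>" "\<eta> \<le> \<beta> / 3" "\<eta> \<le> 1/2" using bge dd0 by (auto simp: \<eta>_def)
  define \<sigma> where "\<sigma> = \<beta> - \<eta>"
  have us1: "norm (u \<sigma>) = 1" using eta by (intro u1) (auto simp: \<sigma>_def)
  have us0: "u \<sigma> \<noteq> 0" using us1 by auto
  obtain z where z: "norm z = 2 * \<eta>" "norm (z + u \<sigma>) = norm (z - u \<sigma>)"
    using bis_ex[OF us0 xnu[of \<sigma>], of "2 * \<eta>"] eta by auto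
  have zR: "norm z \<le> norm (z + t *\<^sub>R u \<sigma>)" for t
    by (rule R[OF us0 z(2)]) (use z(1) us1 eta in simp)
  obtain a b where ab: "z = a *\<^sub>R x + b *\<^sub>R u \<sigma>" using decomp'[OF us0 xnu[of \<sigma>]] by blast
  have a0: "a \<noteq> 0"
  proof
    assume "a = 0"
    then have "z + (- b) *\<^sub>R u \<sigma> = 0" using ab by simp
    then show False using zR[of "- b"] z(1) eta by simp
  qed
  have "norm z \<le> norm (a *\<^sub>R x)" using zR[of "- b"] ab by simp
  then have za: "norm z \<le> \<bar>a\<bar>" using x1 by simp
  define c where "c = b / a"
  have zc: "z = a *\<^sub>R (x + c *\<^sub>R u \<sigma>)" using a0 by (simp add: ab c_def algebra_simps)
  have nc: "norm (x + c *\<^sub>R u \<sigma>) \<le> 1"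
  proof -
    have "norm z = \<bar>a\<bar> * norm (x + c *\<^sub>R u \<sigma>)" by (simp add: zc)
    then show ?thesis using za a0 by (simp add: mult_le_cancel_left_pos)
  qed
  have c0: "c = 0"
  proof (rule ccontr)
    assume "c \<noteq> 0"
    then consider "c > 0" | "c < 0" by linarith
    then show False
    proof cases
      case 1
      define s' where "s' = \<beta> - 2 * \<eta>"
      have s': "0 < s'" "s' < \<beta>" using eta bge dd0 by (auto simp: s'_def)
      define k where "k = 1 + c * (\<sigma> - s')"
      have k1: "k > 1" using 1 eta by (simp add: k_def \<sigma>_def s'_def)
      have "x + c *\<^sub>R u \<sigma> = k *\<^sub>R x + c *\<^sub>R u s'"
        by (simp add: k_def u_def algebra_simps)
      then have "k \<le> norm (x + c *\<^sub>R u \<sigma>)" using birk_scale[OF birk[OF s'], of k c] k1 by simp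
      then show False using nc k1 by simp
    next
      case 2
      define s' where "s' = \<beta> - \<eta> / 2"
      have s': "0 < s'" "s' < \<beta>" using eta bge dd0 by (auto simp: s'_def)
      define k where "k = 1 + c * (\<sigma> - s')"
      have "c * \<eta> < 0" using 2 eta by (simp add: mult_neg_pos)
      then have k1: "k > 1" by (simp add: k_def \<sigma>_def s'_def algebra_simps)
      have "x + c *\<^sub>R u \<sigma> = k *\<^sub>R x + c *\<^sub>R u s'"
        by (simp add: k_def u_def algebra_simps)
      then have "k \<le> norm (x + c *\<^sub>R u \<sigma>)" using birk_scale[OF birk[OF s'], of k c] k1 by simp
      then show False using nc k1 by simp
    qed
  qed
  have za2: "z = a *\<^sub>R x" using zc c0 by simp
  have aa: "\<bar>a\<bar> = 2 * \<eta>" using z(1) x1 za2 by simp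
  have hb3: "h (\<beta> - 3 * \<eta>) = 1" using eta by (intro h1) auto
  have v1: "u \<sigma> + (2 * \<eta>) *\<^sub>R x = p + (\<sigma> + 2 * \<eta>) *\<^sub>R x" by (simp add: u_def scaleR_add_left)
  have v2: "u \<sigma> - (2 * \<eta>) *\<^sub>R x = p + (\<sigma> - 2 * \<eta>) *\<^sub>R x" by (simp add: u_def scaleR_diff_left)
  have s1: "\<sigma> + 2 * \<eta> = \<beta> + \<eta>" and s2: "\<sigma> - 2 * \<eta> = \<beta> - 3 * \<eta>" by (simp_all add: \<sigma>_def)
  have hA: "h (\<beta> + \<eta>) = norm (u \<sigma> + (2 * \<eta>) *\<^sub>R x)" unfolding v1 s1 h_def ..
  have hB: "h (\<beta> - 3 * \<eta>) = norm (u \<sigma> - (2 * \<eta>) *\<^sub>R x)" unfolding v2 s2 h_def ..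
  have eqh: "h (\<beta> + \<eta>) = h (\<beta> - 3 * \<eta>)"
  proof (cases "a \<ge> 0")
    case True
    then have "a = 2 * \<eta>" using aa by simp
    then have "norm ((2 * \<eta>) *\<^sub>R x + u \<sigma>) = norm ((2 * \<eta>) *\<^sub>R x - u \<sigma>)" using z(2) za2 by simp
    then show ?thesis unfolding hA hB
      by (simp add: add.commute norm_minus_commute)
  next
    case False
    then have "a = - (2 * \<eta>)" using aa by simp
    then have "norm (- ((2 * \<eta>) *\<^sub>R x) + u \<sigma>) = norm (- ((2 * \<eta>) *\<^sub>R x) - u \<sigma>)"
      using z(2) za2 by simp
    also have "norm (- ((2 * \<eta>) *\<^sub>R x) - u \<sigma>) = norm (u \<sigma> + (2 * \<eta>) *\<^sub>R x)"
      by (metis minus_add_distrib norm_minus_cancel add.commute diff_conv_add_uminus)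
    finally show ?thesis unfolding hA hB by (simp add: add.commute)
  qed
  have "\<beta> + \<eta> \<in> S" using eqh hb3 eta bge dd0 by (simp add: S_def)
  then have "\<beta> + \<eta> \<le> \<beta>" unfolding \<beta>_def using Sbdd by (rule cSup_upper)
  then show False using eta by simp
qed

end

definition partner :: "'a::real_normed_vector \<Rightarrow> 'a \<Rightarrow> bool" where
  "partner x p \<longleftrightarrow> norm p = 1 \<and> norm (p + x) = norm (p - x) \<and> (\<forall>k. p \<noteq> k *\<^sub>R x) \<and>
     (\<forall>z. z \<noteq> 0 \<longrightarrow> norm z \<le> 1 \<longrightarrow> norm (z + x) = norm (z - x) \<longrightarrow> (\<exists>k. z = k *\<^sub>R p))"

lemma norm_neg_sum: "norm (- a + b) = norm (a - (b::'a::real_normed_vector))"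
  by (metis minus_diff_eq norm_minus_cancel add.commute diff_conv_add_uminus)

lemma norm_neg_diff: "norm (- a - b) = norm (a + (b::'a::real_normed_vector))"
  by (metis minus_add_distrib norm_minus_cancel diff_conv_add_uminus)

context P2 begin

lemma partner_ex:
  fixes x :: 'a
  assumes x1: "norm x = 1"
  shows "\<exists>p. partner x p"
proof -
  have x0: "x \<noteq> 0" using x1 by auto
  obtain w where "\<forall>k. w \<noteq> k *\<^sub>R x" using ex_indep[OF d x0] by blast
  then obtain p where p: "norm p = 1" "norm (p + x) = norm (p - x)" using bis_ex[OF x0, of w 1] by auto
  have pB: "1 \<le> norm (p + t *\<^sub>R x)" for t using R[OF x0 p(2), of t] p(1) x1 by simp
  have pnx: "\<forall>k. p \<noteq> k *\<^sub>R x"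
  proof
    fix k show "p \<noteq> k *\<^sub>R x"
    proof
      assume "p = k *\<^sub>R x"
      then have "p + (- k) *\<^sub>R x = 0" by simp
      then show False using pB[of "- k"] by simp
    qed
  qed
  have uniq: "\<exists>k. z = k *\<^sub>R p" if z: "z \<noteq> 0" "norm z \<le> 1" "norm (z + x) = norm (z - x)" for z
  proof -
    have zB: "norm z \<le> norm (z + t *\<^sub>R x)" for t using R[OF x0 z(3), of t] z(2) x1 by simp
    obtain a b where ab: "z = a *\<^sub>R p + b *\<^sub>R x" using decomp'[OF x0 pnx] by blast
    have a0: "a \<noteq> 0"
    proof
      assume "a = 0"
      then have "z + (- b) *\<^sub>R x = 0" using ab by simp
      then show False using zB[of "- b"] z(1) x1 by simp
    qed
    have za: "norm z \<le> \<bar>a\<bar>" using zB[of "- b"] ab p(1) by simp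
    define c where "c = b / a"
    have zc: "z = a *\<^sub>R (p + c *\<^sub>R x)" using a0 by (simp add: ab c_def algebra_simps)
    have "norm z = \<bar>a\<bar> * norm (p + c *\<^sub>R x)" by (simp add: zc)
    then have n1: "norm (p + c *\<^sub>R x) \<le> 1" using za a0 by (simp add: mult_le_cancel_left_pos)
    then have n1': "norm (p + c *\<^sub>R x) = 1" using pB[of c] by simp
    have "p + (p + c *\<^sub>R x) = 2 *\<^sub>R (p + (c/2) *\<^sub>R x)" by (simp add: algebra_simps scaleR_2)
    then have "norm (p + (p + c *\<^sub>R x)) = 2 * norm (p + (c/2) *\<^sub>R x)" by simp
    then have "2 \<le> norm (p + (p + c *\<^sub>R x))" using pB[of "c/2"] by simp
    moreover have "norm (p + (p + c *\<^sub>R x)) \<le> 2" using norm_triangle_ineq[of p "p + c *\<^sub>R x"] p(1) n1' by simp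
    ultimately have "p = p + c *\<^sub>R x" using SC[OF p(1) n1'] by simp
    then have "c = 0" using x0 by simp
    then show ?thesis using zc by (intro exI[of _ a]) simp
  qed
  show ?thesis unfolding partner_def using p pnx uniq by blast
qed

lemma partner_line:
  fixes x p :: 'a
  assumes x1: "norm x = 1" and P: "partner x p" and r: "0 \<le> r" "r \<le> 1"
  shows "norm (r *\<^sub>R p + x) = norm (r *\<^sub>R p - x)"
proof (cases "r = 0")
  case True then show ?thesis by (simp add: norm_minus_commute)
next
  case False
  then have r0: "r > 0" using r by simp
  have x0: "x \<noteq> 0" using x1 by auto
  have pnx: "\<forall>k. p \<noteq> k *\<^sub>R x" using P by (simp add: partner_def)
  obtain z where z: "norm z = r" "norm (z + x) = norm (z - x)" using bis_ex[OF x0 pnx r0] by blast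
  have "z \<noteq> 0" using z r0 by auto
  then obtain k where k: "z = k *\<^sub>R p" using P z r unfolding partner_def by auto
  have p1: "norm p = 1" using P by (simp add: partner_def)
  have "\<bar>k\<bar> = r" using z(1) k p1 by simp
  then consider "k = r" | "k = - r" by linarith
  then show ?thesis
  proof cases
    case 1 then show ?thesis using z k by simp
  next
    case 2
    then have "norm (- (r *\<^sub>R p) + x) = norm (- (r *\<^sub>R p) - x)" using z k by simp
    then show ?thesis by (simp add: norm_neg_sum norm_neg_diff) (metis norm_minus_commute)
  qed
qed

lemma even_aux:
  fixes v w :: 'a
  assumes h: "\<And>r. 0 \<le> r \<Longrightarrow> r \<le> 1 \<Longrightarrow> norm (r *\<^sub>R v + w) = norm (r *\<^sub>R v - w)"
    and s: "\<bar>s\<bar> \<le> 1"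
  shows "norm (s *\<^sub>R v + w) = norm (s *\<^sub>R v - w)"
proof (cases "0 \<le> s")
  case True then show ?thesis using h s by simp
next
  case False
  have e: "norm ((- s) *\<^sub>R v + w) = norm ((- s) *\<^sub>R v - w)" using h[of "- s"] s False by simp
  have "norm (s *\<^sub>R v + w) = norm (- ((- s) *\<^sub>R v - w))" by (simp add: algebra_simps)
  also have "\<dots> = norm ((- s) *\<^sub>R v + w)" by (simp only: norm_minus_cancel e)
  also have "\<dots> = norm (- ((- s) *\<^sub>R v + w))" by (simp only: norm_minus_cancel)
  also have "\<dots> = norm (s *\<^sub>R v - w)" by (simp add: algebra_simps)
  finally show ?thesis .
qed

lemma partner_even:
  fixes x p :: 'a
  assumes x1: "norm x = 1" and P: "partner x p"
  shows "norm (a *\<^sub>R p + b *\<^sub>R x) = norm (a *\<^sub>R p - b *\<^sub>R x)"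
proof -
  have p1: "norm p = 1" and pb: "norm (p + x) = norm (p - x)" using P by (simp_all add: partner_def)
  obtain p' where P': "partner p p'" using partner_ex[OF p1] by blast
  have xb: "norm (x + p) = norm (x - p)" using pb by (simp add: add.commute norm_minus_commute)
  have "x \<noteq> 0" using x1 by auto
  then obtain k where k: "x = k *\<^sub>R p'" using P' xb x1 unfolding partner_def by auto
  have p'1: "norm p' = 1" using P' by (simp add: partner_def)
  have k1: "\<bar>k\<bar> = 1" using k x1 p'1 by simp
  have E1: "norm (r *\<^sub>R p + x) = norm (r *\<^sub>R p - x)" if "0 \<le> r" "r \<le> 1" for r
    using partner_line[OF x1 P that] .
  have E2: "norm (r *\<^sub>R x + p) = norm (r *\<^sub>R x - p)" if r: "0 \<le> r" "r \<le> 1" for r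
  proof -
    have "r *\<^sub>R x = (r * k) *\<^sub>R p'" using k by simp
    moreover have "\<bar>r * k\<bar> \<le> 1" using k1 r by (simp add: abs_mult)
    ultimately show ?thesis
      using even_aux[of p' p "r * k", OF partner_line[OF p1 P']] by simp
  qed
  show ?thesis
  proof (cases "\<bar>a\<bar> \<le> \<bar>b\<bar>")
    case True
    show ?thesis
    proof (cases "b = 0")
      case True then show ?thesis using \<open>\<bar>a\<bar> \<le> \<bar>b\<bar>\<close> by simp
    next
      case False
      have s: "\<bar>a / b\<bar> \<le> 1" using True False by (simp add: divide_le_eq_1 abs_divide)
      have e: "norm ((a / b) *\<^sub>R p + x) = norm ((a / b) *\<^sub>R p - x)" by (rule even_aux[OF E1 s])
      have "a *\<^sub>R p + b *\<^sub>R x = b *\<^sub>R ((a / b) *\<^sub>R p + x)" and "a *\<^sub>R p - b *\<^sub>R x = b *\<^sub>R ((a / b) *\<^sub>R p - x)"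
        using False by (simp_all add: algebra_simps)
      then show ?thesis using e by simp
    qed
  next
    case False
    then have a0: "a \<noteq> 0" by auto
    have s: "\<bar>b / a\<bar> \<le> 1" using False a0 by (simp add: divide_le_eq_1 abs_divide)
    have e: "norm ((b / a) *\<^sub>R x + p) = norm ((b / a) *\<^sub>R x - p)" by (rule even_aux[OF E2 s])
    have "a *\<^sub>R p + b *\<^sub>R x = a *\<^sub>R ((b / a) *\<^sub>R x + p)" and "a *\<^sub>R p - b *\<^sub>R x = - (a *\<^sub>R ((b / a) *\<^sub>R x - p))"
      using a0 by (simp_all add: algebra_simps)
    then show ?thesis using e by (simp only: norm_minus_cancel norm_scaleR)
  qed
qed

end

context P2 begin

lemma H:
  fixes m d :: 'a
  assumes md: "norm (m + d) = norm (m - d)"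
  shows "norm (m + \<beta> *\<^sub>R d) = norm (m - \<beta> *\<^sub>R d)"
proof -
  consider "d = 0" | "m = 0" | "d \<noteq> 0" "m \<noteq> 0" "norm m \<le> norm d" | "d \<noteq> 0" "m \<noteq> 0" "norm d < norm m"
    by linarith
  then show ?thesis
  proof cases
    case 1 then show ?thesis by simp
  next
    case 2 then show ?thesis by (simp add: norm_minus_commute)
  next
    case 3
    define nd where "nd = norm d"
    have nd0: "nd > 0" using 3 by (simp add: nd_def)
    define x where "x = (1/nd) *\<^sub>R d"
    define z where "z = (1/nd) *\<^sub>R m"
    have x1: "norm x = 1" using nd0 by (simp add: x_def nd_def)
    have "z + x = (1/nd) *\<^sub>R (m + d)" "z - x = (1/nd) *\<^sub>R (m - d)"
      by (simp_all add: x_def z_def algebra_simps)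
    then have zb: "norm (z + x) = norm (z - x)" using md by simp
    have z0: "z \<noteq> 0" using 3 nd0 by (simp add: z_def)
    have z1: "norm z \<le> 1" using 3 nd0 by (simp add: z_def nd_def field_simps)
    obtain p where P: "partner x p" using partner_ex[OF x1] by blast
    then obtain k where k: "z = k *\<^sub>R p" using z0 z1 zb unfolding partner_def by blast
    have "m = nd *\<^sub>R z" using nd0 by (simp add: z_def)
    then have mm: "m = (nd * k) *\<^sub>R p" using k by simp
    have dd: "d = nd *\<^sub>R x" using nd0 by (simp add: x_def)
    have "m + \<beta> *\<^sub>R d = (nd * k) *\<^sub>R p + (nd * \<beta>) *\<^sub>R x" "m - \<beta> *\<^sub>R d = (nd * k) *\<^sub>R p - (nd * \<beta>) *\<^sub>R x"
      by (simp_all add: mm dd)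
    then show ?thesis using partner_even[OF x1 P] by simp
  next
    case 4
    define nm where "nm = norm m"
    have nm0: "nm > 0" using 4 by (simp add: nm_def)
    define x where "x = (1/nm) *\<^sub>R m"
    define z where "z = (1/nm) *\<^sub>R d"
    have x1: "norm x = 1" using nm0 by (simp add: x_def nm_def)
    have "z + x = (1/nm) *\<^sub>R (m + d)" "z - x = - ((1/nm) *\<^sub>R (m - d))"
      by (simp_all add: x_def z_def algebra_simps)
    then have zb: "norm (z + x) = norm (z - x)" using md by (simp only: norm_minus_cancel norm_scaleR)
    have z0: "z \<noteq> 0" using 4 nm0 by (simp add: z_def)
    have z1: "norm z \<le> 1" using 4 nm0 by (simp add: z_def nm_def field_simps)
    obtain p where P: "partner x p" using partner_ex[OF x1] by blast
    then obtain k where k: "z = k *\<^sub>R p" using z0 z1 zb unfolding partner_def by blast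
    have "d = nm *\<^sub>R z" using nm0 by (simp add: z_def)
    then have dd: "d = (nm * k) *\<^sub>R p" using k by simp
    have mm: "m = nm *\<^sub>R x" using nm0 by (simp add: x_def)
    have "m + \<beta> *\<^sub>R d = (nm * \<beta> * k) *\<^sub>R p + nm *\<^sub>R x"
      "m - \<beta> *\<^sub>R d = - ((nm * \<beta> * k) *\<^sub>R p - nm *\<^sub>R x)"
      by (simp_all add: mm dd algebra_simps)
    then show ?thesis using partner_even[OF x1 P, of "nm * \<beta> * k" nm]
      by (simp only: norm_minus_cancel)
  qed
qed

lemma SW:
  fixes u v :: 'a
  assumes u1: "norm u = 1" and v1: "norm v = 1"
  shows "norm (a *\<^sub>R u + b *\<^sub>R v) = norm (b *\<^sub>R u + a *\<^sub>R v)"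
proof (cases "a + b = 0")
  case True
  then have bb: "b = - a" by simp
  have "b *\<^sub>R u + a *\<^sub>R v = - (a *\<^sub>R u + b *\<^sub>R v)" by (simp add: bb algebra_simps)
  then show ?thesis by (simp only: norm_minus_cancel)
next
  case False
  define m where "m = u + v"
  define dv where "dv = u - v"
  have "m + dv = 2 *\<^sub>R u" "m - dv = 2 *\<^sub>R v" by (simp_all add: m_def dv_def scaleR_2)
  then have md: "norm (m + dv) = norm (m - dv)" using u1 v1 by simp
  define \<alpha> where "\<alpha> = (a + b) / 2"
  define \<gamma> where "\<gamma> = (a - b) / 2"
  have a0: "\<alpha> \<noteq> 0" using False by (simp add: \<alpha>_def)
  have ag: "\<alpha> + \<gamma> = a" "\<alpha> - \<gamma> = b" by (simp_all add: \<alpha>_def \<gamma>_def field_simps)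
  have "\<alpha> *\<^sub>R m + \<gamma> *\<^sub>R dv = (\<alpha> + \<gamma>) *\<^sub>R u + (\<alpha> - \<gamma>) *\<^sub>R v"
    by (simp add: m_def dv_def algebra_simps)
  then have "a *\<^sub>R u + b *\<^sub>R v = \<alpha> *\<^sub>R m + \<gamma> *\<^sub>R dv" unfolding ag by simp
  also have "\<dots> = \<alpha> *\<^sub>R (m + (\<gamma> / \<alpha>) *\<^sub>R dv)" using a0 by (simp add: algebra_simps)
  finally have e1: "a *\<^sub>R u + b *\<^sub>R v = \<alpha> *\<^sub>R (m + (\<gamma> / \<alpha>) *\<^sub>R dv)" .
  have "\<alpha> *\<^sub>R m - \<gamma> *\<^sub>R dv = (\<alpha> - \<gamma>) *\<^sub>R u + (\<alpha> + \<gamma>) *\<^sub>R v"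
    by (simp add: m_def dv_def algebra_simps)
  then have "b *\<^sub>R u + a *\<^sub>R v = \<alpha> *\<^sub>R m - \<gamma> *\<^sub>R dv" unfolding ag by simp
  also have "\<dots> = \<alpha> *\<^sub>R (m - (\<gamma> / \<alpha>) *\<^sub>R dv)" using a0 by (simp add: algebra_simps)
  finally have e2: "b *\<^sub>R u + a *\<^sub>R v = \<alpha> *\<^sub>R (m - (\<gamma> / \<alpha>) *\<^sub>R dv)" .
  show ?thesis unfolding e1 e2 using H[OF md, of "\<gamma> / \<alpha>"] by simp
qed

end

lemma comb_add: "(a *\<^sub>R x + b *\<^sub>R y) + (c *\<^sub>R x + e *\<^sub>R y) = (a + c) *\<^sub>R x + (b + e) *\<^sub>R (y::'a::real_vector)"
  by (simp add: algebra_simps)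
lemma comb_scale: "k *\<^sub>R (a *\<^sub>R x + b *\<^sub>R y) = (k * a) *\<^sub>R x + (k * b) *\<^sub>R (y::'a::real_vector)"
  by (simp add: algebra_simps)
lemma comb_eq: "a = c \<Longrightarrow> b = e \<Longrightarrow> a *\<^sub>R x + b *\<^sub>R y = c *\<^sub>R x + e *\<^sub>R (y::'a::real_vector)"
  by simp

context P2 begin

lemma pyth:
  fixes x y :: 'a
  assumes x1: "norm x = 1" and P: "partner x y"
  shows "norm (a *\<^sub>R x + b *\<^sub>R y) ^ 2 = a^2 + b^2"
proof -
  have y1: "norm y = 1" using P by (simp add: partner_def)
  have y0: "y \<noteq> 0" using y1 by auto
  have ev: "norm (a *\<^sub>R x + b *\<^sub>R y) = norm (a *\<^sub>R x - b *\<^sub>R y)" for a b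
  proof -
    have "norm (b *\<^sub>R y + a *\<^sub>R x) = norm (b *\<^sub>R y - a *\<^sub>R x)" by (rule partner_even[OF x1 P])
    then show ?thesis by (simp add: add.commute norm_minus_commute)
  qed
  have sw: "norm (a *\<^sub>R x + b *\<^sub>R y) = norm (b *\<^sub>R x + a *\<^sub>R y)" for a b by (rule SW[OF x1 y1])
  define h where "h t = norm (x + t *\<^sub>R y)" for t
  have hev: "h (- t) = h t" for t
    using ev[of 1 t] by (simp add: h_def)
  have hge: "1 \<le> h t" for t
  proof -
    have "2 *\<^sub>R x = (x + t *\<^sub>R y) + (x - t *\<^sub>R y)" by (simp add: scaleR_2)
    then have "norm (2 *\<^sub>R x) \<le> norm (x + t *\<^sub>R y) + norm (x - t *\<^sub>R y)" by (metis norm_triangle_ineq)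
    then have "2 \<le> h t + h (- t)" using x1 by (simp add: h_def)
    then show ?thesis using hev[of t] by simp
  qed
  have hconv: "h (l * a + (1 - l) * b) \<le> l * h a + (1 - l) * h b" if "0 \<le> l" "l \<le> 1" for l a b
  proof -
    have "x + (l * a + (1 - l) * b) *\<^sub>R y = l *\<^sub>R (x + a *\<^sub>R y) + (1 - l) *\<^sub>R (x + b *\<^sub>R y)"
      by (simp add: algebra_simps)
    then have "h (l * a + (1 - l) * b) \<le> norm (l *\<^sub>R (x + a *\<^sub>R y)) + norm ((1 - l) *\<^sub>R (x + b *\<^sub>R y))"
      unfolding h_def by (metis norm_triangle_ineq)
    then show ?thesis using that by (simp add: h_def)
  qed
  have hmono: "h s \<le> h t" if "0 \<le> s" "s \<le> t" for s t
  proof (cases "t = 0")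
    case True then show ?thesis using that by simp
  next
    case False
    then have t0: "t > 0" using that by simp
    define l where "l = (t + s) / (2 * t)"
    have l0: "0 \<le> l" "l \<le> 1" using that t0 by (auto simp: l_def field_simps)
    have E: "l * t + (1 - l) * (- t) = s" using t0 by (simp add: l_def field_simps)
    have "h s \<le> l * h t + (1 - l) * h (- t)" using hconv[of l t "- t", unfolded E] l0 by simp
    then show ?thesis using hev[of t] by (simp add: algebra_simps)
  qed
  have hinj: "s = t" if st: "0 \<le> s" "s \<le> t" and hst: "h s = h t" for s t
  proof -
    define m where "m = (s + t) / 2"
    have E: "(1/2) * s + (1 - 1/2) * t = m" by (simp add: m_def)
    have "h m \<le> (1/2) * h s + (1 - 1/2) * h t" using hconv[of "1/2" s t, unfolded E] by simp
    moreover have "h s \<le> h m" using st by (intro hmono) (auto simp: m_def)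
    ultimately have hm: "h m = h t" using hst by simp
    define HH where "HH = h t"
    have H1: "HH \<ge> 1" using hge by (simp add: HH_def)
    define P' where "P' = (1 / HH) *\<^sub>R (x + s *\<^sub>R y)"
    define Q where "Q = (1 / HH) *\<^sub>R (x + t *\<^sub>R y)"
    have nz: "x + t *\<^sub>R y \<noteq> 0" "x + s *\<^sub>R y \<noteq> 0" using H1 hst by (auto simp: HH_def h_def)
    have P1: "norm P' = 1" using H1 hst nz by (simp add: P'_def h_def HH_def)
    have Q1: "norm Q = 1" using H1 nz by (simp add: Q_def h_def HH_def)
    have "P' + Q = (1/HH) *\<^sub>R (1 *\<^sub>R x + s *\<^sub>R y) + (1/HH) *\<^sub>R (1 *\<^sub>R x + t *\<^sub>R y)"
      by (simp add: P'_def Q_def)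
    also have "\<dots> = ((1/HH)*1 + (1/HH)*1) *\<^sub>R x + ((1/HH) * s + (1/HH) * t) *\<^sub>R y"
      by (simp only: comb_scale comb_add)
    also have "\<dots> = ((2/HH)*1) *\<^sub>R x + ((2/HH)*m) *\<^sub>R y"
      by (rule comb_eq) (use H1 in \<open>simp_all add: m_def field_simps\<close>)
    also have "\<dots> = (2/HH) *\<^sub>R (1 *\<^sub>R x + m *\<^sub>R y)" by (simp only: comb_scale)
    finally have "P' + Q = (2/HH) *\<^sub>R (x + m *\<^sub>R y)" by simp
    moreover have "norm (x + m *\<^sub>R y) = HH" using hm by (simp add: h_def HH_def)
    ultimately have "norm (P' + Q) = 2" using H1 by simp
    then have "P' = Q" by (rule SC[OF P1 Q1])
    then have "x + s *\<^sub>R y = x + t *\<^sub>R y" using H1 by (simp add: P'_def Q_def)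
    then show ?thesis using y0 by simp
  qed
  have hpos: "h t ^ 2 = 1 + t ^ 2" if t0: "t > 0" for t
  proof -
    define HH where "HH = h t"
    have H1: "HH \<ge> 1" using hge by (simp add: HH_def)
    define u where "u = (1 / HH) *\<^sub>R (x + t *\<^sub>R y)"
    have nz: "x + t *\<^sub>R y \<noteq> 0" using H1 by (auto simp: HH_def h_def)
    have u1: "norm u = 1" using H1 nz by (simp add: u_def h_def HH_def)
    have sw2: "norm ((- 1 / t) *\<^sub>R x + (HH / t) *\<^sub>R u) = norm ((HH / t) *\<^sub>R x + (- 1 / t) *\<^sub>R u)"
      by (rule SW[OF x1 u1])
    have ue: "u = (1/HH) *\<^sub>R (1 *\<^sub>R x + t *\<^sub>R y)" by (simp add: u_def)
    have "(- 1 / t) *\<^sub>R x + (HH / t) *\<^sub>R u = (- 1 / t) *\<^sub>R (1 *\<^sub>R x + 0 *\<^sub>R y) + (HH / t) *\<^sub>R ((1/HH) *\<^sub>R (1 *\<^sub>R x + t *\<^sub>R y))"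
      by (simp add: ue)
    also have "\<dots> = ((- 1 / t) * 1 + (HH / t) * ((1/HH) * 1)) *\<^sub>R x + ((- 1 / t) * 0 + (HH / t) * ((1/HH) * t)) *\<^sub>R y"
      by (simp only: comb_scale comb_add)
    also have "\<dots> = 0 *\<^sub>R x + 1 *\<^sub>R y"
      by (rule comb_eq) (use H1 t0 in \<open>simp_all add: field_simps\<close>)
    finally have v1: "(- 1 / t) *\<^sub>R x + (HH / t) *\<^sub>R u = y" by simp
    define c where "c = (HH^2 - 1) / t"
    have "(HH / t) *\<^sub>R x + (- 1 / t) *\<^sub>R u = (HH / t) *\<^sub>R (1 *\<^sub>R x + 0 *\<^sub>R y) + (- 1 / t) *\<^sub>R ((1/HH) *\<^sub>R (1 *\<^sub>R x + t *\<^sub>R y))"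
      by (simp add: ue)
    also have "\<dots> = ((HH / t) * 1 + (- 1 / t) * ((1/HH) * 1)) *\<^sub>R x + ((HH / t) * 0 + (- 1 / t) * ((1/HH) * t)) *\<^sub>R y"
      by (simp only: comb_scale comb_add)
    also have "\<dots> = ((1/HH) * c) *\<^sub>R x + ((1/HH) * (- 1)) *\<^sub>R y"
      by (rule comb_eq) (use H1 t0 in \<open>simp_all add: c_def field_simps power2_eq_square\<close>)
    also have "\<dots> = (1/HH) *\<^sub>R (c *\<^sub>R x + (- 1) *\<^sub>R y)" by (simp only: comb_scale)
    finally have v2: "(HH / t) *\<^sub>R x + (- 1 / t) *\<^sub>R u = (1 / HH) *\<^sub>R (c *\<^sub>R x - y)" by simp
    have e3: "norm y = norm ((1 / HH) *\<^sub>R (c *\<^sub>R x - y))" using sw2 unfolding v1 v2 .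
    have "norm ((1 / HH) *\<^sub>R (c *\<^sub>R x - y)) = norm (c *\<^sub>R x - y) / HH" using H1 by simp
    then have "norm (c *\<^sub>R x - y) = HH" using e3 y1 H1 by (simp add: field_simps)
    then have "norm (c *\<^sub>R x + 1 *\<^sub>R y) = HH" using ev[of c 1] by simp
    then have "h c = HH" using sw[of c 1] by (simp add: h_def)
    moreover have c0: "0 \<le> c" using H1 t0 by (simp add: c_def)
    ultimately have "c = t"
      using hinj[of c t] hinj[of t c] t0 by (cases "c \<le> t") (auto simp: HH_def)
    then have "HH^2 - 1 = t * t" using t0 by (simp add: c_def field_simps)
    then show ?thesis by (simp add: HH_def power2_eq_square)
  qed
  have hall: "h t ^ 2 = 1 + t ^ 2" for t
  proof -
    consider "t > 0" | "t = 0" | "t < 0" by linarith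
    then show ?thesis
    proof cases
      case 1 then show ?thesis by (rule hpos)
    next
      case 2 then show ?thesis using x1 by (simp add: h_def)
    next
      case 3 then show ?thesis using hpos[of "- t"] hev[of t] by simp
    qed
  qed
  show ?thesis
  proof (cases "a = 0")
    case True then show ?thesis using y1 by (simp add: power_mult_distrib)
  next
    case False
    have "a *\<^sub>R x + b *\<^sub>R y = a *\<^sub>R (x + (b / a) *\<^sub>R y)" using False by (simp add: algebra_simps)
    then have "norm (a *\<^sub>R x + b *\<^sub>R y) ^ 2 = a^2 * h (b / a) ^ 2"
      by (simp add: h_def power_mult_distrib)
    also have "\<dots> = a^2 * (1 + (b / a)^2)" by (simp only: hall)
    also have "\<dots> = a^2 + b^2" using False by (simp add: field_simps power2_eq_square)
    finally show ?thesis .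
  qed
qed

end

lemma comb_diff: "(a *\<^sub>R x + b *\<^sub>R y) - (c *\<^sub>R x + e *\<^sub>R y) = (a - c) *\<^sub>R x + (b - e) *\<^sub>R (y::'a::real_vector)"
  by (simp add: algebra_simps)

context P2 begin

lemma ip: "inner_product_norm TYPE('a)"
proof -
  obtain x :: 'a where "x \<in> sphere 0 1" using sphere_ne[OF d] by blast
  then have x1: "norm x = 1" by simp
  then have x0: "x \<noteq> 0" by auto
  obtain y where P: "partner x y" using partner_ex[OF x1] by blast
  have ynx: "\<forall>k. y \<noteq> k *\<^sub>R x" using P by (simp add: partner_def)
  have coord: "\<exists>a b. u = a *\<^sub>R x + b *\<^sub>R y" for u
  proof -
    obtain a b where "u = a *\<^sub>R y + b *\<^sub>R x" using decomp'[OF x0 ynx] by blast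
    then show ?thesis by (intro exI[of _ b] exI[of _ a]) (simp add: add.commute)
  qed
  define f where "f u v = (norm (u + v) ^ 2 - norm (u - v) ^ 2) / 4" for u v :: 'a
  have fval: "f u v = a * c + b * e" if u: "u = a *\<^sub>R x + b *\<^sub>R y" and v: "v = c *\<^sub>R x + e *\<^sub>R y" for u v a b c e
  proof -
    have "norm (u + v) ^ 2 = (a + c)^2 + (b + e)^2" unfolding u v comb_add by (rule pyth[OF x1 P])
    moreover have "norm (u - v) ^ 2 = (a - c)^2 + (b - e)^2" unfolding u v comb_diff by (rule pyth[OF x1 P])
    ultimately show ?thesis by (simp add: f_def power2_eq_square algebra_simps)
  qed
  have fsym: "f u v = f v u" for u v by (simp add: f_def add.commute norm_minus_commute)
  have ladd: "f (u1 + u2) v = f u1 v + f u2 v" for u1 u2 v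
  proof -
    obtain a1 b1 where 1: "u1 = a1 *\<^sub>R x + b1 *\<^sub>R y" using coord by blast
    obtain a2 b2 where 2: "u2 = a2 *\<^sub>R x + b2 *\<^sub>R y" using coord by blast
    obtain c e where 3: "v = c *\<^sub>R x + e *\<^sub>R y" using coord by blast
    have s: "u1 + u2 = (a1 + a2) *\<^sub>R x + (b1 + b2) *\<^sub>R y" unfolding 1 2 comb_add ..
    show ?thesis unfolding fval[OF s 3] fval[OF 1 3] fval[OF 2 3] by (simp add: algebra_simps)
  qed
  have lmul: "f (k *\<^sub>R u) v = k * f u v" for k u v
  proof -
    obtain a b where 1: "u = a *\<^sub>R x + b *\<^sub>R y" using coord by blast
    obtain c e where 3: "v = c *\<^sub>R x + e *\<^sub>R y" using coord by blast
    have s: "k *\<^sub>R u = (k * a) *\<^sub>R x + (k * b) *\<^sub>R y" unfolding 1 comb_scale ..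
    show ?thesis unfolding fval[OF s 3] fval[OF 1 3] by (simp add: algebra_simps)
  qed
  have radd: "f u (v1 + v2) = f u v1 + f u v2" for u v1 v2
  proof -
    have "f u (v1 + v2) = f (v1 + v2) u" by (rule fsym)
    also have "\<dots> = f v1 u + f v2 u" by (rule ladd)
    also have "\<dots> = f u v1 + f u v2" using fsym[of v1 u] fsym[of v2 u] by simp
    finally show ?thesis .
  qed
  have rmul: "f u (k *\<^sub>R v) = k * f u v" for k u v
  proof -
    have "f u (k *\<^sub>R v) = f (k *\<^sub>R v) u" by (rule fsym)
    also have "\<dots> = k * f v u" by (rule lmul)
    also have "\<dots> = k * f u v" using fsym[of v u] by simp
    finally show ?thesis .
  qed
  have bl: "bilinear f"
    unfolding bilinear_def linear_iff
    by (simp add: ladd lmul radd rmul)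
  have fn: "norm u = sqrt (f u u)" for u
  proof -
    have "u + u = 2 *\<^sub>R u" by (simp add: scaleR_2)
    then have "f u u = norm (2 *\<^sub>R u) ^ 2 / 4" by (simp add: f_def)
    also have "\<dots> = norm u ^ 2" by (simp add: power_mult_distrib)
    finally have "f u u = norm u ^ 2" .
    then show ?thesis by simp
  qed
  show ?thesis unfolding inner_product_norm_def
    using bl fsym fn by blast
qed

end

theorem theorem4p1:
  assumes "dim (UNIV :: 'a::real_normed_vector set) = 2"
  shows "1/3 \<le> cB TYPE('a) \<and> cB TYPE('a) \<le> 1
         \<and> (cB TYPE('a) = 1 \<longleftrightarrow> inner_product_norm TYPE('a))"
proof (intro conjI iffI)
  show "1/3 \<le> cB TYPE('a)" using cB_ge_half[OF assms] by simp
  show "cB TYPE('a) \<le> 1" by (rule cB_le_1[OF assms])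
  show "inner_product_norm TYPE('a)" if c: "cB TYPE('a) = 1"
  proof -
    interpret P2 "TYPE('a)" by unfold_locales (rule assms, rule c)
    show ?thesis by (rule ip)
  qed
  show "cB TYPE('a) = 1" if "inner_product_norm TYPE('a)" by (rule ip_cB[OF assms that])
qed

end
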